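(* For integers $d \ge 0$ define \[ \textsc{OCB}^*(d) := 0.8948 \int_0^{1/2} \frac{r(1-2r)}{(1-r)^2}\, r^d \, dr, \qquad \textsc{MLB}^*(d) := 0.9 \int_0^{1/2} \frac{(1-2r)^2}{(1-r)^3}\, r^d \, dr . \] Let $\textnormal{\textsc{Thr}}$ be a positive constant with $\textnormal{\textsc{Thr}} \le 1/4678$. Then: (1) for every integer $d \ge 5$, $\textsc{OCB}^*(d) \ge \textsc{MLB}^*(d)$; (2) for every integer $0 \le d \le 4$, $\textsc{OCB}^*(d) \ge \frac{1}{1131} \ge \textnormal{\textsc{Thr}}$ and $\textsc{MLB}^*(d) \ge \frac{1}{1131} \ge \textnormal{\textsc{Thr}}$.
   Context: $\textnormal{\textsc{Thr}}$ is the label-density threshold fixed in the paper; the only property of it used in this statement is $\textnormal{\textsc{Thr}} \le 1/4678$. *)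

theory Defs
  imports "HOL-Analysis.Analysis"
begin

definition OCB_star :: "nat \<Rightarrow> real" where
  "OCB_star d = 0.8948 * integral {0..1/2} (\<lambda>r::real. r * (1 - 2*r) / (1 - r)^2 * r ^ d)"

definition MLB_star :: "nat \<Rightarrow> real" where
  "MLB_star d = 0.9 * integral {0..1/2} (\<lambda>r::real. (1 - 2*r)^2 / (1 - r)^3 * r ^ d)"

end

theory Submission
  imports Defs
begin

definition lt :: "nat \<Rightarrow> real" where "lt n = (1/2)^(Suc n) / real (Suc n)"

lemma lt_summable: "summable lt"
proof (rule summable_comparison_test[where g = "\<lambda>n. (1/2::real)^n"])
  show "\<exists>N. \<forall>n\<ge>N. norm (lt n) \<le> (1/2) ^ n"
  proof (intro exI allI impI)
    fix n :: nat
    have "(1/2::real)^(Suc n) / real (Suc n) \<le> (1/2)^(Suc n)"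
      by (simp add: divide_le_eq)
    also have "\<dots> \<le> (1/2)^n" by simp
    finally show "norm (lt n) \<le> (1/2) ^ n" by (simp add: lt_def)
  qed
  show "summable (\<lambda>n. (1/2::real)^n)" by (rule summable_geometric) simp
qed

lemma ln2_suminf: "ln 2 = suminf lt"
proof -
  have "ln (1/2::real) = (\<Sum> n. (-1)^n * (1 / real (n + 1)) * (1/2 - 1)^(Suc n))"
    by (rule ln_series) auto
  also have "(\<lambda>n. (-1)^n * (1 / real (n + 1)) * (1/2 - 1::real)^(Suc n)) = (\<lambda>n. - lt n)"
  proof
    fix n
    have "(1/2 - 1::real)^(Suc n) = (-1)^(Suc n) * (1/2)^(Suc n)"
      by (simp add: power_mult_distrib[symmetric])
    then show "(-1)^n * (1 / real (n + 1)) * (1/2 - 1::real)^(Suc n) = - lt n"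
      by (simp add: lt_def power_add)
  qed
  also have "(\<Sum>n. - lt n) = - suminf lt" by (rule suminf_minus[OF lt_summable])
  finally show ?thesis by (simp add: ln_div)
qed

lemma ln2_lower: "(\<Sum>n<N. lt n) \<le> ln 2"
  unfolding ln2_suminf
  by (rule sum_le_suminf[OF lt_summable]) (auto simp: lt_def)

lemma ln2_upper: "ln 2 \<le> (\<Sum>n<N. lt n) + (1/2)^N / real (Suc N)"
proof -
  have s: "summable (\<lambda>n. lt (n + N))" using lt_summable by (rule summable_ignore_initial_segment)
  have g: "(\<lambda>n. (1/2)^(Suc N) / real (Suc N) * (1/2::real)^n) sums ((1/2)^(Suc N) / real (Suc N) * (1 / (1 - 1/2)))"
    by (rule sums_mult) (rule geometric_sums, simp)
  have "(\<Sum>n. lt (n + N)) \<le> (\<Sum>n. (1/2)^(Suc N) / real (Suc N) * (1/2::real)^n)"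
  proof (rule suminf_le[OF _ s sums_summable[OF g]])
    fix n
    have "lt (n + N) = (1/2)^(Suc N) * (1/2)^n / real (Suc (n + N))"
      by (simp add: lt_def power_add[symmetric] add.commute)
    also have "\<dots> \<le> (1/2)^(Suc N) * (1/2)^n / real (Suc N)"
      by (rule divide_left_mono) auto
    finally show "lt (n + N) \<le> (1/2)^(Suc N) / real (Suc N) * (1/2::real)^n" by simp
  qed
  also have "\<dots> = (1/2)^(Suc N) / real (Suc N) * (1 / (1 - 1/2))" by (rule sums_unique[OF g, symmetric])
  also have "\<dots> = (1/2)^N / real (Suc N)"
  proof -
    have "\<And>a::real. a / 2 / real (Suc N) * (1 / (1 - 1/2)) = a / real (Suc N)"
      by (simp add: divide_simps del: of_nat_Suc)
    from this[of "(1/2)^N"] show ?thesis by (simp only: power_Suc)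
  qed
  finally show ?thesis
    unfolding ln2_suminf suminf_split_initial_segment[OF lt_summable, of N] by simp
qed

lemma ln2_bounds: "69314713/100000000 \<le> ln (2::real) \<and> ln (2::real) \<le> 693148/1000000"
proof -
  have e: "(\<Sum>n<22. lt n) = 84598851790183/122050345697280"
    by (simp add: lt_def eval_nat_numeral)
  show ?thesis using ln2_lower[of 22] ln2_upper[of 22] unfolding e by (simp add: power_divide; linarith)
qed
lemma ftc_aux:
  fixes F f :: "real \<Rightarrow> real"
  assumes "\<And>x. x \<in> {0..1/2} \<Longrightarrow> (F has_real_derivative f x) (at x)"
  shows "integral {0..1/2::real} f = F (1/2) - F 0"
proof -
  have "(f has_integral F (1/2) - F 0) {0..1/2}"
    by (rule fundamental_theorem_of_calculus)
       (auto intro!: has_field_derivative_at_within assms simp: has_real_derivative_iff_has_vector_derivative[symmetric])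
  then show ?thesis by (rule integral_unique)
qed

lemma intO4: "integral {0..1/2} (\<lambda>r::real. r * (1 - 2*r) / (1 - r)^2 * r ^ 4) = -4657/960 + 7 * ln 2"
proof -
  define G where "G = (\<lambda>r::real. - 1 / (1 - r) ^ 1 - 7 * ln (1 - r) + 20 * (1 - r) ^ 1 - 15 * (1 - r) ^ 2 + 25/3 * (1 - r) ^ 3 - 11/4 * (1 - r) ^ 4 + 2/5 * (1 - r) ^ 5)"
  have "integral {0..1/2} (\<lambda>r::real. r * (1 - 2*r) / (1 - r)^2 * r ^ 4) = G (1/2) - G 0"
  proof (rule ftc_aux)
    fix x :: real assume x: "x \<in> {0..1/2}"
    then have x1: "1 - x \<noteq> 0" "1 - x > 0" by auto
    show "(G has_real_derivative (\<lambda>r::real. r * (1 - 2*r) / (1 - r)^2 * r ^ 4) x) (at x)"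
      unfolding G_def
      apply (intro derivative_eq_intros)
      using x1 apply simp_all
      apply (subgoal_tac "x \<noteq> 1")
      apply (simp add: divide_simps)
      apply (simp add: algebra_simps power2_eq_square power3_eq_cube power4_eq_xxxx power_numeral_reduce)
      by simp
  qed
  also have "\<dots> = -4657/960 + 7 * ln 2" by (simp add: G_def ln_div power_divide)
  finally show ?thesis .
qed

lemma intO5: "integral {0..1/2} (\<lambda>r::real. r * (1 - 2*r) / (1 - r)^2 * r ^ 5) = -5323/960 + 8 * ln 2"
proof -
  define G where "G = (\<lambda>r::real. - 1 / (1 - r) ^ 1 - 8 * ln (1 - r) + 27 * (1 - r) ^ 1 - 25 * (1 - r) ^ 2 + 55/3 * (1 - r) ^ 3 - 9 * (1 - r) ^ 4 + 13/5 * (1 - r) ^ 5 - 1/3 * (1 - r) ^ 6)"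
  have "integral {0..1/2} (\<lambda>r::real. r * (1 - 2*r) / (1 - r)^2 * r ^ 5) = G (1/2) - G 0"
  proof (rule ftc_aux)
    fix x :: real assume x: "x \<in> {0..1/2}"
    then have x1: "1 - x \<noteq> 0" "1 - x > 0" by auto
    show "(G has_real_derivative (\<lambda>r::real. r * (1 - 2*r) / (1 - r)^2 * r ^ 5) x) (at x)"
      unfolding G_def
      apply (intro derivative_eq_intros)
      using x1 apply simp_all
      apply (subgoal_tac "x \<noteq> 1")
      apply (simp add: divide_simps)
      apply (simp add: algebra_simps power2_eq_square power3_eq_cube power4_eq_xxxx power_numeral_reduce)
      by simp
  qed
  also have "\<dots> = -5323/960 + 8 * ln 2" by (simp add: G_def ln_div power_divide)
  finally show ?thesis .
qed

lemma intM4: "integral {0..1/2} (\<lambda>r::real. (1 - 2*r)^2 / (1 - r)^3 * r ^ 4) = -865/48 + 26 * ln 2"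
proof -
  define G where "G = (\<lambda>r::real. 1/2 / (1 - r) ^ 2 - 8 / (1 - r) ^ 1 - 26 * ln (1 - r) + 44 * (1 - r) ^ 1 - 41/2 * (1 - r) ^ 2 + 20/3 * (1 - r) ^ 3 - 1 * (1 - r) ^ 4)"
  have "integral {0..1/2} (\<lambda>r::real. (1 - 2*r)^2 / (1 - r)^3 * r ^ 4) = G (1/2) - G 0"
  proof (rule ftc_aux)
    fix x :: real assume x: "x \<in> {0..1/2}"
    then have x1: "1 - x \<noteq> 0" "1 - x > 0" by auto
    show "(G has_real_derivative (\<lambda>r::real. (1 - 2*r)^2 / (1 - r)^3 * r ^ 4) x) (at x)"
      unfolding G_def
      apply (intro derivative_eq_intros)
      using x1 apply simp_all
      apply (subgoal_tac "x \<noteq> 1")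
      apply (simp add: divide_simps)
      apply (simp add: algebra_simps power2_eq_square power3_eq_cube power4_eq_xxxx power_numeral_reduce)
      by simp
  qed
  also have "\<dots> = -865/48 + 26 * ln 2" by (simp add: G_def ln_div power_divide)
  finally show ?thesis .
qed

lemma intM5: "integral {0..1/2} (\<lambda>r::real. (1 - 2*r)^2 / (1 - r)^3 * r ^ 5) = -707/30 + 34 * ln 2"
proof -
  define G where "G = (\<lambda>r::real. 1/2 / (1 - r) ^ 2 - 9 / (1 - r) ^ 1 - 34 * ln (1 - r) + 70 * (1 - r) ^ 1 - 85/2 * (1 - r) ^ 2 + 61/3 * (1 - r) ^ 3 - 6 * (1 - r) ^ 4 + 4/5 * (1 - r) ^ 5)"
  have "integral {0..1/2} (\<lambda>r::real. (1 - 2*r)^2 / (1 - r)^3 * r ^ 5) = G (1/2) - G 0"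
  proof (rule ftc_aux)
    fix x :: real assume x: "x \<in> {0..1/2}"
    then have x1: "1 - x \<noteq> 0" "1 - x > 0" by auto
    show "(G has_real_derivative (\<lambda>r::real. (1 - 2*r)^2 / (1 - r)^3 * r ^ 5) x) (at x)"
      unfolding G_def
      apply (intro derivative_eq_intros)
      using x1 apply simp_all
      apply (subgoal_tac "x \<noteq> 1")
      apply (simp add: divide_simps)
      apply (simp add: algebra_simps power2_eq_square power3_eq_cube power4_eq_xxxx power_numeral_reduce)
      by simp
  qed
  also have "\<dots> = -707/30 + 34 * ln 2" by (simp add: G_def ln_div power_divide)
  finally show ?thesis .
qed

lemma contO: "continuous_on {0..1/2} (\<lambda>r::real. r * (1 - 2*r) / (1 - r)^2 * r ^ d)"
  by (intro continuous_intros) auto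

lemma contM: "continuous_on {0..1/2} (\<lambda>r::real. (1 - 2*r)^2 / (1 - r)^3 * r ^ d)"
  by (intro continuous_intros) auto

lemma intgO: "(\<lambda>r::real. r * (1 - 2*r) / (1 - r)^2 * r ^ d) integrable_on {0..1/2}"
  by (rule integrable_continuous_interval[OF contO])

lemma intgM: "(\<lambda>r::real. (1 - 2*r)^2 / (1 - r)^3 * r ^ d) integrable_on {0..1/2}"
  by (rule integrable_continuous_interval[OF contM])

lemma OCB_ge4: assumes "d \<le> 4" shows "OCB_star 4 \<le> OCB_star d"
  unfolding OCB_star_def
proof (rule mult_left_mono[OF integral_le[OF intgO intgO]])
  fix r :: real assume r: "r \<in> {0..1/2}"
  have "r ^ 4 \<le> r ^ d" using r assms by (intro power_decreasing) auto
  moreover have "0 \<le> r * (1 - 2*r) / (1 - r)^2" using r by auto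
  ultimately show "r * (1 - 2*r) / (1 - r)^2 * r ^ 4 \<le> r * (1 - 2*r) / (1 - r)^2 * r ^ d"
    by (rule mult_left_mono)
qed simp

lemma MLB_ge4: assumes "d \<le> 4" shows "MLB_star 4 \<le> MLB_star d"
  unfolding MLB_star_def
proof (rule mult_left_mono[OF integral_le[OF intgM intgM]])
  fix r :: real assume r: "r \<in> {0..1/2}"
  have "r ^ 4 \<le> r ^ d" using r assms by (intro power_decreasing) auto
  moreover have "0 \<le> (1 - 2*r)^2 / (1 - r)^3" using r by auto
  ultimately show "(1 - 2*r)^2 / (1 - r)^3 * r ^ 4 \<le> (1 - 2*r)^2 / (1 - r)^3 * r ^ d"
    by (rule mult_left_mono)
qed simp

lemma part2: "d \<le> 4 \<Longrightarrow> OCB_star d \<ge> 1/1131 \<and> MLB_star d \<ge> 1/1131"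
proof -
  assume d: "d \<le> 4"
  have "OCB_star 4 \<ge> 1/1131" "MLB_star 4 \<ge> 1/1131"
    unfolding OCB_star_def MLB_star_def intO4 intM4 using ln2_bounds by auto
  then show ?thesis using OCB_ge4[OF d] MLB_ge4[OF d] by auto
qed

lemma pw_eq0:
  fixes r y u A p :: real assumes "u \<noteq> 0"
  shows "0.8948 * (r * A / u^2 * (p * y)) - 0.9 * (A^2 / u^3 * (p * y))
     = A / u^3 * p * (0.8948 * r * u - 0.9 * A) * y"
  using assms by (simp add: field_simps power2_eq_square power3_eq_cube)

lemma pw_eq:
  fixes r y :: real assumes "r \<noteq> 1"
  shows "0.8948 * (r * (1 - 2*r) / (1 - r)^2 * (r^5 * y)) - 0.9 * ((1 - 2*r)^2 / (1 - r)^3 * (r^5 * y))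
     = (1 - 2*r) / (1 - r)^3 * r^5 * (0.8948 * r * (1 - r) - 0.9 * (1 - 2*r)) * y"
  by (rule pw_eq0) (use assms in simp)

lemma part1:
  assumes d: "d \<ge> 5" shows "MLB_star d \<le> OCB_star d"
proof -
  define k where "k = d - 5"
  have dk: "d = 5 + k" using d k_def by simp
  define a :: real where "a = 2.6948"
  define b :: real where "b = 0.8948"
  define s where "s = sqrt (a^2 - 4*b*0.9)"
  define c where "c = (a - s) / (2*b)"
  define c' where "c' = (a + s) / (2*b)"
  have D: "a^2 - 4*b*0.9 \<ge> 0" unfolding a_def b_def by (simp add: power2_eq_square)
  have s2: "s^2 = a^2 - 4*b*0.9" unfolding s_def by (rule real_sqrt_pow2[OF D])
  have s0: "s \<ge> 0" unfolding s_def using D by simp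
  have sa: "s \<le> a"
  proof -
    have "s \<le> sqrt (a^2)" unfolding s_def by (rule real_sqrt_le_mono) (simp add: b_def)
    then show ?thesis by (simp add: a_def)
  qed
  have b0: "b > 0" by (simp add: b_def)
  have c0: "c \<ge> 0" unfolding c_def using sa b0 by simp
  have c'h: "c' \<ge> 1/2" unfolding c'_def using s0 b0 by (simp add: a_def b_def field_simps)
  have sum_cc: "b*(c+c') = a" unfolding c_def c'_def using b0 by (simp add: field_simps)
  have prod_cc: "b*c*c' = 0.9"
  proof -
    have "b*c*c' = (a^2 - s^2)/(4*b)" unfolding c_def c'_def using b0
      by (simp add: field_simps power2_eq_square)
    also have "\<dots> = 0.9" using s2 b0 by simp
    finally show ?thesis .
  qed
  have q: "b*r*(1-r) - 0.9*(1-2*r) = b*(c' - r)*(r - c)" for r :: real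
  proof -
    have "b*(c' - r)*(r - c) = r*(b*(c+c')) - b*r^2 - b*c*c'" by (simp add: algebra_simps power2_eq_square)
    also have "\<dots> = r*a - b*r^2 - 0.9" using sum_cc prod_cc by simp
    also have "a = b + 1.8" by (simp add: a_def b_def)
    finally have e: "b*(c' - r)*(r - c) = r*(b + 1.8) - b*r^2 - 0.9" .
    show ?thesis unfolding e by (simp add: algebra_simps power2_eq_square diff_divide_distrib)
  qed
  define H where "H = (\<lambda>n::nat. \<lambda>r::real. 0.8948 * (r * (1 - 2*r) / (1 - r)^2 * r ^ n) - 0.9 * ((1 - 2*r)^2 / (1 - r)^3 * r ^ n))"
  have intH: "integral {0..1/2} (H n) = OCB_star n - MLB_star n" for n
  proof -
    have "integral {0..1/2} (H n) = integral {0..1/2} (\<lambda>r::real. 0.8948 * (r * (1 - 2*r) / (1 - r)^2 * r ^ n)) - integral {0..1/2} (\<lambda>r::real. 0.9 * ((1 - 2*r)^2 / (1 - r)^3 * r ^ n))"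
      unfolding H_def
      by (rule integral_diff; rule integrable_continuous_interval; intro continuous_intros; auto)
    also have "\<dots> = OCB_star n - MLB_star n"
      unfolding OCB_star_def MLB_star_def by (simp only: integral_mult[OF intgO] integral_mult[OF intgM])
    finally show ?thesis .
  qed
  have intgH: "H n integrable_on {0..1/2}" for n
    unfolding H_def by (rule integrable_continuous_interval; intro continuous_intros; auto)
  have pw: "c^k * H 5 r \<le> H d r" if r: "r \<in> {0..1/2}" for r
  proof -
    have r1: "r \<noteq> 1" using r by auto
    define w where "w = (1 - 2*r) / (1 - r)^3 * r^5"
    have w0: "w \<ge> 0" unfolding w_def using r by auto
    have Hd: "H d r = w * (b*r*(1-r) - 0.9*(1-2*r)) * r^k"
      unfolding H_def w_def b_def dk power_add using pw_eq[OF r1, of "r^k"] by simp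
    have H5: "H 5 r = w * (b*r*(1-r) - 0.9*(1-2*r))"
      unfolding H_def w_def b_def using pw_eq[OF r1, of 1] by simp
    have m: "(r - c) * (r^k - c^k) \<ge> 0"
    proof (cases "r \<ge> c")
      case True
      then have "r^k \<ge> c^k" using c0 by (intro power_mono) auto
      then show ?thesis using True by simp
    next
      case False
      then have "r^k \<le> c^k" using r by (intro power_mono) auto
      then show ?thesis using False by (simp add: mult_nonpos_nonpos)
    qed
    have "0 \<le> w * (b * (c' - r) * ((r - c) * (r^k - c^k)))"
    proof -
      have bc: "0 \<le> b * (c' - r)" using b0 c'h r by simp
      show ?thesis by (rule mult_nonneg_nonneg[OF w0 mult_nonneg_nonneg[OF bc m]])
    qed
    then show ?thesis unfolding Hd H5 q by (simp add: algebra_simps)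
  qed
  have "c^k * integral {0..1/2} (H 5) = integral {0..1/2} (\<lambda>r. c^k * H 5 r)"
    by (rule integral_mult[OF intgH])
  also have "\<dots> \<le> integral {0..1/2} (H d)"
  proof (rule integral_le[OF _ intgH pw])
    show "(\<lambda>r. c^k * H 5 r) integrable_on {0..1/2}"
      using integrable_on_cmult_left[OF intgH, of "c^k" 5] by simp
  qed
  finally have "c^k * (OCB_star 5 - MLB_star 5) \<le> OCB_star d - MLB_star d" unfolding intH .
  moreover have "OCB_star 5 - MLB_star 5 \<ge> 0"
    unfolding OCB_star_def MLB_star_def intO5 intM5 using ln2_bounds by auto
  moreover have "c^k \<ge> 0" using c0 by simp
  ultimately show ?thesis by (smt (verit) mult_nonneg_nonneg)
qed

theorem mainTheorem4:
  fixes Thr :: real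
  assumes "0 < Thr" and "Thr \<le> 1/4678"
  shows "(\<forall>d::nat. d \<ge> 5 \<longrightarrow> OCB_star d \<ge> MLB_star d) \<and>
         (\<forall>d::nat. d \<le> 4 \<longrightarrow>
            OCB_star d \<ge> 1/1131 \<and> (1/1131::real) \<ge> Thr \<and>
            MLB_star d \<ge> 1/1131)"
  using part1 part2 assms(2) by auto

end
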